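(* Let $G=(V,E)$ be a directed graph with $|V|=n$ vertices, and let $W\subseteq V$ be a set of vertices whose minimal dominating set has size $k$. Then $W$ contains an independent set $U$ of size at least $\tfrac{1}{50}k/\ln n$ with the property that every vertex $v\in V$ dominates at most $\ln n$ vertices of $U$, i.e. $|N^{\mathrm{out}}(v)\cap U|\le\ln n$ for all $v\in V$.
   Context: For a directed graph $G=(V,E)$ (self-loops allowed), $N^{\mathrm{out}}(v)=\{w:(v,w)\in E\}$; a vertex $v$ dominates $w$ if $w\in N^{\mathrm{out}}(v)$. A dominating set of $W\subseteq V$ is a set $D\subseteq V$ such that every $w\in W$ is dominated by some $d\in D$; "the minimal dominating set of $W$ has size $k$" means the smallest such $D$ has $|D|=k$. An independent set is a set $S$ such that $(u,v)\notin E$ for all distinct $u,v\in S$. *)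

theory Defs
  imports Complex_Main
begin

text \<open>Directed graph: vertex set V, edge set E \<subseteq> V \<times> V (self-loops allowed).\<close>

definition out_nbrs :: "('a \<times> 'a) set \<Rightarrow> 'a \<Rightarrow> 'a set" where
  "out_nbrs E v = {w. (v, w) \<in> E}"

definition dominating_set :: "'a set \<Rightarrow> ('a \<times> 'a) set \<Rightarrow> 'a set \<Rightarrow> 'a set \<Rightarrow> bool" where
  "dominating_set V E W D \<longleftrightarrow> D \<subseteq> V \<and> (\<forall>w\<in>W. \<exists>d\<in>D. w \<in> out_nbrs E d)"

definition min_dom_size :: "'a set \<Rightarrow> ('a \<times> 'a) set \<Rightarrow> 'a set \<Rightarrow> nat \<Rightarrow> bool" where
  "min_dom_size V E W k \<longleftrightarrow>
     (\<exists>D. dominating_set V E W D \<and> card D = k) \<and>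
     (\<forall>D. dominating_set V E W D \<longrightarrow> k \<le> card D)"

definition independent_set :: "('a \<times> 'a) set \<Rightarrow> 'a set \<Rightarrow> bool" where
  "independent_set E S \<longleftrightarrow> (\<forall>u\<in>S. \<forall>v\<in>S. u \<noteq> v \<longrightarrow> (u, v) \<notin> E)"

end

theory Submission
  imports Defs
begin

lemma card_filter_sum:
  "finite A \<Longrightarrow> real (card {x\<in>A. P x}) = (\<Sum>x\<in>A. if P x then 1 else 0)"
  by (simp add: sum.inter_filter[symmetric])

lemma frac_cover:
  fixes V :: "'a set" and E :: "('a \<times> 'a) set" and q :: "'a \<Rightarrow> real" and \<beta> Q :: real
  assumes fin: "finite V" and qnn: "\<And>v. v \<in> V \<Longrightarrow> q v \<ge> 0"
    and Qdef: "(\<Sum>v\<in>V. q v) = Q" and bpos: "\<beta> > 0"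
  shows "finite P \<Longrightarrow> P \<noteq> {} \<Longrightarrow> (\<forall>w\<in>P. (\<Sum>v\<in>V. if (v,w)\<in>E then q v else 0) > \<beta>) \<Longrightarrow>
     \<exists>D\<subseteq>V. (\<forall>w\<in>P. \<exists>d\<in>D. (d,w)\<in>E) \<and> real (card D) \<le> 1 + (Q/\<beta>) * ln (real (card P))"
proof (induction "card P" arbitrary: P rule: less_induct)
  case less
  have Pfin: "finite P" and Pne: "P \<noteq> {}"
    and cov: "\<forall>w\<in>P. (\<Sum>v\<in>V. if (v,w)\<in>E then q v else 0) > \<beta>" using less.prems by auto
  define c where "c v = card (out_nbrs E v \<inter> P)" for v
  have cexp: "real (c v) = (\<Sum>w\<in>P. if (v,w)\<in>E then 1 else 0)" for v
  proof -
    have "out_nbrs E v \<inter> P = {w\<in>P. (v,w)\<in>E}" by (auto simp: out_nbrs_def)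
    then show ?thesis unfolding c_def using card_filter_sum[OF Pfin] by simp
  qed
  obtain w0 where w0: "w0 \<in> P" using Pne by auto
  have "(\<Sum>v\<in>V. if (v,w0)\<in>E then q v else 0) \<le> (\<Sum>v\<in>V. q v)"
    by (rule sum_mono) (use qnn in auto)
  with cov w0 Qdef bpos have Qpos: "Q > 0" by force
  have "(\<Sum>v\<in>V. q v * real (c v)) = (\<Sum>v\<in>V. \<Sum>w\<in>P. if (v,w)\<in>E then q v else 0)"
    by (simp add: cexp sum_distrib_left if_distrib cong: if_cong)
  also have "\<dots> = (\<Sum>w\<in>P. \<Sum>v\<in>V. if (v,w)\<in>E then q v else 0)" by (rule sum.swap)
  also have "\<dots> > (\<Sum>w\<in>P. \<beta>)"
    by (rule sum_strict_mono) (use Pfin Pne cov in auto)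
  finally have big: "(\<Sum>v\<in>V. q v * real (c v)) > \<beta> * real (card P)" by (simp add: mult.commute)
  have "\<exists>v\<in>V. real (c v) * Q \<ge> \<beta> * real (card P)"
  proof (rule ccontr)
    assume "\<not> ?thesis"
    then have h: "\<And>v. v\<in>V \<Longrightarrow> real (c v) * Q < \<beta> * real (card P)" by force
    have "(\<Sum>v\<in>V. q v * real (c v)) * Q = (\<Sum>v\<in>V. q v * (real (c v) * Q))"
      by (simp add: sum_distrib_right mult.assoc)
    also have "\<dots> \<le> (\<Sum>v\<in>V. q v * (\<beta> * real (card P)))"
      by (rule sum_mono) (use h qnn in \<open>auto intro: mult_left_mono less_imp_le\<close>)
    also have "\<dots> = Q * (\<beta> * real (card P))" using Qdef by (simp add: sum_distrib_right[symmetric])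
    finally have "(\<Sum>v\<in>V. q v * real (c v)) \<le> \<beta> * real (card P)"
      using Qpos by (simp add: mult.commute)
    with big show False by simp
  qed
  then obtain v where vV: "v \<in> V" and cv: "real (c v) * Q \<ge> \<beta> * real (card P)" by auto
  define P' where "P' = P - out_nbrs E v"
  have cardP': "card P' = card P - c v" unfolding P'_def c_def
    by (metis Diff_Int2 Int_lower2 Pfin card_Diff_subset finite_Int inf.idem inf_commute)
  have cle: "c v \<le> card P" unfolding c_def by (simp add: Pfin card_mono)
  have Ppos: "real (card P) > 0" using Pfin Pne by (simp add: card_gt_0_iff)
  have cpos: "c v > 0"
  proof -
    have "real (c v) * Q > 0" using cv bpos Ppos by (smt (verit) mult_pos_pos)
    then show ?thesis using Qpos by (simp add: zero_less_mult_iff)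
  qed
  show ?case
  proof (cases "P' = {}")
    case True
    have "\<forall>w\<in>P. \<exists>d\<in>{v}. (d,w)\<in>E" using True by (auto simp: P'_def out_nbrs_def)
    moreover have "ln (real (card P)) \<ge> 0" using Ppos by simp
    then have "(Q/\<beta>) * ln (real (card P)) \<ge> 0" using Qpos bpos by simp
    ultimately show ?thesis using vV
      by (intro exI[of _ "{v}"]) auto
  next
    case False
    have lt: "card P' < card P" using cardP' cpos cle by simp
    have "finite P'" using Pfin by (simp add: P'_def)
    moreover have "\<forall>w\<in>P'. (\<Sum>v\<in>V. if (v,w)\<in>E then q v else 0) > \<beta>" using cov by (auto simp: P'_def)
    ultimately obtain D' where D': "D' \<subseteq> V" "\<forall>w\<in>P'. \<exists>d\<in>D'. (d,w)\<in>E"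
      "real (card D') \<le> 1 + (Q/\<beta>) * ln (real (card P'))"
      using less.hyps[OF lt] False by blast
    have fD': "finite D'" using D'(1) fin finite_subset by blast
    have P'pos: "real (card P') > 0" using False \<open>finite P'\<close> by (simp add: card_gt_0_iff)
    have rP': "real (card P') = real (card P) - real (c v)" using cardP' cle by simp
    have "ln (real (card P')) - ln (real (card P)) = ln (real (card P') / real (card P))"
      using P'pos Ppos by (simp add: ln_div)
    also have "\<dots> \<le> real (card P') / real (card P) - 1"
      using P'pos Ppos by (intro ln_le_minus_one) simp
    also have "\<dots> = - real (c v) / real (card P)" using rP' Ppos by (simp add: diff_divide_distrib)
    also have "\<dots> \<le> - \<beta> / Q"
      using cv Qpos Ppos by (simp add: field_simps)
    finally have lnb: "ln (real (card P')) \<le> ln (real (card P)) - \<beta> / Q" by simp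
    have "(Q/\<beta>) * ln (real (card P')) \<le> (Q/\<beta>) * (ln (real (card P)) - \<beta> / Q)"
      using lnb Qpos bpos by (intro mult_left_mono) auto
    also have "\<dots> = (Q/\<beta>) * ln (real (card P)) - 1" using Qpos bpos by (simp add: field_simps)
    finally have A: "(Q/\<beta>) * ln (real (card P')) \<le> (Q/\<beta>) * ln (real (card P)) - 1" .
    have "real (card (insert v D')) \<le> real (card D') + 1"
      using fD' by (simp add: card_insert_if)
    then have "real (card (insert v D')) \<le> 1 + (Q/\<beta>) * ln (real (card P))" using A D'(3) by linarith
    moreover have "\<forall>w\<in>P. \<exists>d\<in>insert v D'. (d,w)\<in>E"
      using D'(2) by (auto simp: P'_def out_nbrs_def)
    ultimately show ?thesis using vV D'(1) by (intro exI[of _ "insert v D'"]) auto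
  qed
qed


lemma indep_extract:
  fixes E :: "('a \<times> 'a) set" and t :: real
  assumes tnn: "t \<ge> 0"
  shows "finite U0 \<Longrightarrow> (\<forall>u\<in>U0. real (card {u'\<in>U0. u' \<noteq> u \<and> (u,u')\<in>E}) \<le> t) \<Longrightarrow>
    \<exists>U\<subseteq>U0. independent_set E U \<and> real (card U0) \<le> (2*t+1) * real (card U)"
proof (induction "card U0" arbitrary: U0 rule: less_induct)
  case less
  have fin: "finite U0" and deg: "\<forall>u\<in>U0. real (card {u'\<in>U0. u' \<noteq> u \<and> (u,u')\<in>E}) \<le> t"
    using less.prems by auto
  show ?case
  proof (cases "U0 = {}")
    case True
    then show ?thesis by (intro exI[of _ "{}"]) (auto simp: independent_set_def)
  next
    case False
    define outs where "outs u = {u'\<in>U0. u' \<noteq> u \<and> (u,u')\<in>E}" for u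
    define ins where "ins u = {u'\<in>U0. u' \<noteq> u \<and> (u',u)\<in>E}" for u
    define Nb where "Nb u = outs u \<union> ins u" for u
    have "(\<Sum>u\<in>U0. real (card (ins u))) = (\<Sum>u\<in>U0. \<Sum>u'\<in>U0. if u' \<noteq> u \<and> (u',u)\<in>E then 1 else 0)"
      unfolding ins_def using card_filter_sum[OF fin] by simp
    also have "\<dots> = (\<Sum>u'\<in>U0. \<Sum>u\<in>U0. if u' \<noteq> u \<and> (u',u)\<in>E then 1 else 0)" by (rule sum.swap)
    also have "\<dots> = (\<Sum>u'\<in>U0. real (card (outs u')))"
      unfolding outs_def by (intro sum.cong refl) (simp only: card_filter_sum[OF fin], intro sum.cong refl, auto)
    finally have swp: "(\<Sum>u\<in>U0. real (card (ins u))) = (\<Sum>u\<in>U0. real (card (outs u)))" .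
    have so: "(\<Sum>u\<in>U0. real (card (outs u))) \<le> (\<Sum>u\<in>U0. t)"
      by (rule sum_mono) (use deg in \<open>simp add: outs_def\<close>)
    have "(\<Sum>u\<in>U0. real (card (Nb u))) \<le> (\<Sum>u\<in>U0. real (card (outs u)) + real (card (ins u)))"
      by (rule sum_mono) (simp add: Nb_def card_Un_le flip: of_nat_add)
    also have "\<dots> \<le> (\<Sum>u\<in>U0. 2 * t)" using swp so by (simp add: sum.distrib)
    finally have sNb: "(\<Sum>u\<in>U0. real (card (Nb u))) \<le> (\<Sum>u\<in>U0. 2 * t)" .
    have "\<exists>u\<in>U0. real (card (Nb u)) \<le> 2 * t"
    proof (rule ccontr)
      assume "\<not> ?thesis"
      then have "(\<Sum>u\<in>U0. 2 * t) < (\<Sum>u\<in>U0. real (card (Nb u)))"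
        using fin False by (intro sum_strict_mono) auto
      with sNb show False by simp
    qed
    then obtain u where uU: "u \<in> U0" and uN: "real (card (Nb u)) \<le> 2 * t" by auto
    define U0' where "U0' = U0 - insert u (Nb u)"
    have sub: "insert u (Nb u) \<subseteq> U0" using uU by (auto simp: Nb_def outs_def ins_def)
    have finI: "finite (insert u (Nb u))" using sub fin by (rule finite_subset)
    then have finN: "finite (Nb u)" by simp
    have cU0: "card U0 = card U0' + card (insert u (Nb u))"
    proof -
      have "finite (insert u (Nb u))" using finN by simp
      then have "card U0' = card U0 - card (insert u (Nb u))"
        unfolding U0'_def using sub by (simp add: card_Diff_subset)
      moreover have "card (insert u (Nb u)) \<le> card U0" using sub fin by (simp add: card_mono)
      ultimately show ?thesis by simp
    qed
    have lt: "card U0' < card U0" using cU0 finI by (simp add: card_gt_0_iff)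
    have fin': "finite U0'" using fin by (simp add: U0'_def)
    have deg': "\<forall>u\<in>U0'. real (card {u'\<in>U0'. u' \<noteq> u \<and> (u,u')\<in>E}) \<le> t"
    proof
      fix x assume x: "x \<in> U0'"
      have "card {u'\<in>U0'. u' \<noteq> x \<and> (x,u')\<in>E} \<le> card {u'\<in>U0. u' \<noteq> x \<and> (x,u')\<in>E}"
        by (rule card_mono) (use fin in \<open>auto simp: U0'_def\<close>)
      then show "real (card {u'\<in>U0'. u' \<noteq> x \<and> (x,u')\<in>E}) \<le> t"
      proof -
        have "x \<in> U0" using x by (simp add: U0'_def)
        then have "real (card {u'\<in>U0. u' \<noteq> x \<and> (x,u')\<in>E}) \<le> t" using deg by blast
        with \<open>card _ \<le> _\<close> show ?thesis by linarith
      qed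
    qed
    obtain U' where U': "U' \<subseteq> U0'" "independent_set E U'" "real (card U0') \<le> (2*t+1) * real (card U')"
      using less.hyps[OF lt fin' deg'] by blast
    have uU': "u \<notin> U'" using U'(1) by (auto simp: U0'_def)
    have finU': "finite U'" using U'(1) fin' by (rule finite_subset)
    have ind: "independent_set E (insert u U')"
      unfolding independent_set_def
    proof (intro ballI impI)
      fix a b assume a: "a \<in> insert u U'" and b: "b \<in> insert u U'" and ab: "a \<noteq> b"
      show "(a,b) \<notin> E"
      proof (cases "a = u")
        case True
        then have "b \<in> U'" using b ab by auto
        then have "b \<notin> Nb u" "b \<in> U0" using U'(1) by (auto simp: U0'_def)
        then show ?thesis using True ab by (auto simp: Nb_def outs_def)
      next
        case False
        then have aU: "a \<in> U'" using a by auto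
        show ?thesis
        proof (cases "b = u")
          case True
          then have "a \<notin> Nb u" "a \<in> U0" using U'(1) aU by (auto simp: U0'_def)
          then show ?thesis using True ab by (auto simp: Nb_def ins_def)
        next
          case False
          then have "b \<in> U'" using b by auto
          then show ?thesis using U'(2) aU ab by (auto simp: independent_set_def)
        qed
      qed
    qed
    have "real (card (insert u (Nb u))) \<le> real (card (Nb u)) + 1"
      using finN by (simp add: card_insert_if)
    then have "real (card U0) \<le> (2*t+1) * real (card U') + (2*t+1)"
      using cU0 U'(3) uN by simp
    also have "\<dots> = (2*t+1) * real (card (insert u U'))"
      using uU' finU' by (simp add: algebra_simps)
    finally show ?thesis using ind U'(1) uU sub
      by (intro exI[of _ "insert u U'"]) (auto simp: U0'_def)
  qed
qed

definition Phi :: "'a set \<Rightarrow> ('a \<times> 'a) set \<Rightarrow> 'a set \<Rightarrow> real" where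
  "Phi V E U = (\<Sum>v\<in>V. exp (2 * real (card (out_nbrs E v \<inter> U))))"

definition phi :: "'a set \<Rightarrow> ('a \<times> 'a) set \<Rightarrow> 'a set \<Rightarrow> 'a \<Rightarrow> real" where
  "phi V E U w = (\<Sum>v\<in>V. if (v,w)\<in>E then exp (2 * real (card (out_nbrs E v \<inter> U))) else 0)"

lemma Phi_insert:
  assumes "finite U" "w \<notin> U"
  shows "Phi V E (insert w U) = Phi V E U + (exp 2 - 1) * phi V E U w"
proof -
  have tm: "exp (2 * real (card (out_nbrs E v \<inter> insert w U))) =
     exp (2 * real (card (out_nbrs E v \<inter> U))) +
     (exp 2 - 1) * (if (v,w)\<in>E then exp (2 * real (card (out_nbrs E v \<inter> U))) else 0)" for v
  proof (cases "(v,w)\<in>E")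
    case True
    then have "out_nbrs E v \<inter> insert w U = insert w (out_nbrs E v \<inter> U)"
      by (auto simp: out_nbrs_def)
    then have "card (out_nbrs E v \<inter> insert w U) = Suc (card (out_nbrs E v \<inter> U))"
      using assms by simp
    then have "exp (2 * real (card (out_nbrs E v \<inter> insert w U))) =
        exp (2 * real (card (out_nbrs E v \<inter> U))) * exp 2"
      by (simp add: distrib_left exp_add)
    then show ?thesis using True by (simp add: algebra_simps)
  next
    case False
    then have "out_nbrs E v \<inter> insert w U = out_nbrs E v \<inter> U"
      by (auto simp: out_nbrs_def)
    then show ?thesis using False by simp
  qed
  show ?thesis unfolding Phi_def phi_def
    by (simp only: tm sum.distrib sum_distrib_left)
qed

lemma greedy:
  assumes finV: "finite V" and WV: "W \<subseteq> V" and rpos: "\<rho> > 0"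
  shows "\<exists>U\<subseteq>W. card U \<le> s \<and> Phi V E U \<le> real (card V) * exp ((exp 2 - 1) * real (card U) / \<rho>)
      \<and> (card U = s \<or> (\<forall>w\<in>W-U. phi V E U w > Phi V E U / \<rho>))"
proof (induction s)
  case 0
  have "Phi V E {} = real (card V)" by (simp add: Phi_def)
  then show ?case by (intro exI[of _ "{}"]) simp
next
  case (Suc s)
  then obtain U where U: "U \<subseteq> W" "card U \<le> s"
    "Phi V E U \<le> real (card V) * exp ((exp 2 - 1) * real (card U) / \<rho>)"
    "card U = s \<or> (\<forall>w\<in>W-U. phi V E U w > Phi V E U / \<rho>)" by blast
  show ?case
  proof (cases "\<forall>w\<in>W-U. phi V E U w > Phi V E U / \<rho>")
    case True
    then show ?thesis using U by (intro exI[of _ U]) auto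
  next
    case False
    then have cs: "card U = s" using U(4) by blast
    from False obtain w where w: "w \<in> W" "w \<notin> U" "phi V E U w \<le> Phi V E U / \<rho>" by force
    have finU: "finite U" using U(1) WV finV by (meson finite_subset)
    have e2: "exp 2 - 1 \<ge> (0::real)" by simp
    have Pnn: "Phi V E U \<ge> 0" unfolding Phi_def by (intro sum_nonneg) simp
    have "Phi V E (insert w U) = Phi V E U + (exp 2 - 1) * phi V E U w"
      using Phi_insert[OF finU w(2)] .
    also have "\<dots> \<le> Phi V E U + (exp 2 - 1) * (Phi V E U / \<rho>)"
      using w(3) e2 by (intro add_left_mono mult_left_mono) auto
    also have "\<dots> = Phi V E U * (1 + (exp 2 - 1) / \<rho>)" by (simp add: algebra_simps)
    also have "\<dots> \<le> Phi V E U * exp ((exp 2 - 1) / \<rho>)"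
      using Pnn by (intro mult_left_mono) (auto simp: add.commute intro: exp_ge_add_one_self)
    also have "\<dots> \<le> real (card V) * exp ((exp 2 - 1) * real (card U) / \<rho>) * exp ((exp 2 - 1) / \<rho>)"
      using U(3) by (intro mult_right_mono) auto
    also have "\<dots> = real (card V) * exp ((exp 2 - 1) * real (card (insert w U)) / \<rho>)"
    proof -
      have "(exp 2 - 1) * real (card U) / \<rho> + (exp 2 - 1) / \<rho> = (exp 2 - 1) * real (card (insert w U)) / \<rho>"
        using finU w(2) rpos by (simp add: field_simps)
      then show ?thesis by (simp add: mult.assoc flip: exp_add)
    qed
    finally show ?thesis using U(1) w(1) cs finU w(2)
      by (intro exI[of _ "insert w U"]) auto
  qed
qed

theorem lemma8:
  fixes V :: "'a set" and E :: "('a \<times> 'a) set" and W :: "'a set" and n k :: nat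
  assumes "finite V" and "E \<subseteq> V \<times> V" and "card V = n" and "n \<ge> 3"
    and "W \<subseteq> V" and "min_dom_size V E W k"
  shows "\<exists>U. U \<subseteq> W \<and> independent_set E U
           \<and> real (card U) \<ge> (1/50) * real k / ln (real n)
           \<and> (\<forall>v\<in>V. real (card (out_nbrs E v \<inter> U)) \<le> ln (real n))"
proof -
  note finV = assms(1) and WV = assms(5)
  define L where "L = ln (real n)"
  have n3: "real n \<ge> 3" using assms(4) by simp
  have L1: "L \<ge> 1"
  proof -
    have "ln (exp 1) \<le> ln (real n)" using exp_le n3 by (subst ln_le_cancel_iff) auto
    then show ?thesis by (simp add: L_def)
  qed
  have nexp: "real n = exp L" using n3 by (simp add: L_def)
  obtain D0 where D0: "dominating_set V E W D0" "card D0 = k"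
    and mn: "\<And>D. dominating_set V E W D \<Longrightarrow> k \<le> card D"
    using assms(6) unfolding min_dom_size_def by blast
  have domW: "\<forall>w\<in>W. \<exists>d\<in>D0. w \<in> out_nbrs E d" and D0V: "D0 \<subseteq> V"
    using D0(1) by (auto simp: dominating_set_def)
  show ?thesis
  proof (cases "k = 0")
    case True
    then show ?thesis using L1 by (intro exI[of _ "{}"]) (auto simp: independent_set_def L_def)
  next
    case knz: False
    show ?thesis
    proof (cases "k \<le> 50")
      case True
      have "W \<noteq> {}"
      proof
        assume "W = {}"
        then have "dominating_set V E W {}" by (simp add: dominating_set_def)
        then show False using mn knz by fastforce
      qed
      then obtain w where w: "w \<in> W" by auto
      have c1: "real (card (out_nbrs E v \<inter> {w})) \<le> L" for v
      proof -
        have "card (out_nbrs E v \<inter> {w}) \<le> card {w}" by (rule card_mono) auto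
        then show ?thesis using L1 by simp
      qed
      have "(1/50) * real k / L \<le> 1"
        using True L1 by (simp add: divide_le_eq)
      then show ?thesis using w c1
        by (intro exI[of _ "{w}"]) (auto simp: independent_set_def L_def)
    next
      case False
      then have k51: "real k \<ge> 51" by simp
      define \<rho> where "\<rho> = 6 * real k / (7 * L)"
      have rpos: "\<rho> > 0" using k51 L1 by (simp add: \<rho>_def)
      define S where "S = k div 10"
      obtain U0 where U0: "U0 \<subseteq> W" "card U0 \<le> S"
        "Phi V E U0 \<le> real (card V) * exp ((exp 2 - 1) * real (card U0) / \<rho>)"
        "card U0 = S \<or> (\<forall>w\<in>W-U0. phi V E U0 w > Phi V E U0 / \<rho>)"
        using greedy[OF finV WV rpos, of S E] by blast
      have finU0: "finite U0" using U0(1) WV finV by (meson finite_subset)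
      have e2: "exp 2 \<le> (9::real)"
      proof -
        have "exp (2::real) = exp 1 * exp 1" by (simp flip: exp_add)
        also have "\<dots> \<le> 3 * 3" using exp_le by (intro mult_mono) auto
        finally show ?thesis by simp
      qed
      have S10: "real (card U0) \<le> real k / 10"
      proof -
        have "card U0 * 10 \<le> k" using U0(2) unfolding S_def by linarith
        then show ?thesis by simp
      qed
      have "(exp 2 - 1) * real (card U0) \<le> 8 * (real k / 10)"
        using e2 S10 by (intro mult_mono) auto
      also have "\<dots> \<le> L * \<rho>" using k51 L1 by (simp add: \<rho>_def)
      finally have expo: "(exp 2 - 1) * real (card U0) / \<rho> \<le> L"
        using rpos by (simp add: divide_le_eq mult.commute)
      have Pbound: "Phi V E U0 \<le> exp (2 * L)"
      proof -
        have "Phi V E U0 \<le> exp L * exp L"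
          using U0(3) expo assms(3) nexp by (auto intro: order_trans mult_left_mono)
        then show ?thesis by (simp flip: exp_add)
      qed
      have cnt: "real (card (out_nbrs E v \<inter> U0)) \<le> L" if v: "v \<in> V" for v
      proof -
        have "exp (2 * real (card (out_nbrs E v \<inter> U0))) \<le> Phi V E U0"
          unfolding Phi_def using v finV by (intro member_le_sum) auto
        then have "exp (2 * real (card (out_nbrs E v \<inter> U0))) \<le> exp (2 * L)"
          using Pbound by linarith
        then show ?thesis by simp
      qed
      have size: "real (card U0) \<ge> (real k - 9) / 10"
      proof (cases "card U0 = S")
        case True
        have "k = 10 * (k div 10) + k mod 10" by simp
        moreover have "k mod 10 \<le> 9" by simp
        ultimately have "real k \<le> 10 * real (k div 10) + 9" by linarith
        then show ?thesis using True by (simp add: S_def)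
      next
        case nS: False
        then have stop: "\<forall>w\<in>W-U0. phi V E U0 w > Phi V E U0 / \<rho>" using U0(4) by blast
        define P where "P = W - U0"
        have Vne: "V \<noteq> {}" using assms(3,4) by auto
        have Ppos: "Phi V E U0 > 0" unfolding Phi_def using finV Vne by (intro sum_pos) auto
        have "\<exists>DP\<subseteq>V. (\<forall>w\<in>P. \<exists>d\<in>DP. (d,w)\<in>E) \<and> real (card DP) \<le> 1 + \<rho> * L"
        proof (cases "P = {}")
          case True
          then show ?thesis using rpos L1 by (intro exI[of _ "{}"]) auto
        next
          case Pne: False
          have finP: "finite P" using finV WV by (simp add: P_def finite_subset)
          obtain DP where DP: "DP \<subseteq> V" "\<forall>w\<in>P. \<exists>d\<in>DP. (d,w)\<in>E"
            "real (card DP) \<le> 1 + (Phi V E U0 / (Phi V E U0 / \<rho>)) * ln (real (card P))"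
            using frac_cover[OF finV _ refl, of "\<lambda>v. exp (2 * real (card (out_nbrs E v \<inter> U0)))"
                "Phi V E U0 / \<rho>" P E, folded Phi_def] finP Pne stop rpos Ppos
            unfolding P_def phi_def by auto
          have "Phi V E U0 / (Phi V E U0 / \<rho>) = \<rho>" using Ppos rpos by simp
          moreover have "ln (real (card P)) \<le> L"
          proof -
            have "card P \<le> n" using assms(3) finV WV by (metis P_def Diff_subset card_mono subset_trans)
            moreover have "card P > 0" using finP Pne by (simp add: card_gt_0_iff)
            ultimately show ?thesis unfolding L_def by simp
          qed
          ultimately have "real (card DP) \<le> 1 + \<rho> * L"
            using DP(3) rpos by (smt (verit) mult_left_mono)
          then show ?thesis using DP by blast
        qed
        then obtain DP where DP: "DP \<subseteq> V" "\<forall>w\<in>P. \<exists>d\<in>DP. (d,w)\<in>E" "real (card DP) \<le> 1 + \<rho> * L"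
          by blast
        define f where "f w = (SOME d. d \<in> D0 \<and> w \<in> out_nbrs E d)" for w
        have f: "f w \<in> D0 \<and> w \<in> out_nbrs E (f w)" if "w \<in> W" for w
          unfolding f_def using domW that by (metis (mono_tags, lifting) someI_ex)
        define D where "D = f ` U0 \<union> DP"
        have "dominating_set V E W D"
          unfolding dominating_set_def
        proof
          show "D \<subseteq> V" using f U0(1) D0V DP(1) by (auto simp: D_def)
          show "\<forall>w\<in>W. \<exists>d\<in>D. w \<in> out_nbrs E d"
          proof
            fix w assume w: "w \<in> W"
            show "\<exists>d\<in>D. w \<in> out_nbrs E d"
            proof (cases "w \<in> U0")
              case True
              then show ?thesis using f[OF w] by (auto simp: D_def)
            next
              case False
              then have "w \<in> P" using w by (simp add: P_def)
              then show ?thesis using DP(2) by (auto simp: D_def out_nbrs_def)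
            qed
          qed
        qed
        then have "k \<le> card D" by (rule mn)
        also have "\<dots> \<le> card (f ` U0) + card DP" unfolding D_def by (rule card_Un_le)
        also have "\<dots> \<le> card U0 + card DP" using card_image_le[OF finU0, of f] by simp
        finally have "real k \<le> real (card U0) + (1 + \<rho> * L)" using DP(3) by linarith
        moreover have "\<rho> * L = 6 * real k / 7" using L1 by (simp add: \<rho>_def)
        ultimately show ?thesis using k51 by simp
      qed
      have deg: "\<forall>u\<in>U0. real (card {u'\<in>U0. u' \<noteq> u \<and> (u,u')\<in>E}) \<le> L"
      proof
        fix u assume u: "u \<in> U0"
        have "card {u'\<in>U0. u' \<noteq> u \<and> (u,u')\<in>E} \<le> card (out_nbrs E u \<inter> U0)"
          by (rule card_mono) (use finU0 in \<open>auto simp: out_nbrs_def\<close>)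
        moreover have "u \<in> V" using u U0(1) WV by auto
        ultimately show "real (card {u'\<in>U0. u' \<noteq> u \<and> (u,u')\<in>E}) \<le> L"
          using cnt by (smt (verit) of_nat_le_iff)
      qed
      obtain U where U: "U \<subseteq> U0" "independent_set E U" "real (card U0) \<le> (2*L+1) * real (card U)"
        using indep_extract[of L U0 E] L1 finU0 deg by auto
      have cntU: "real (card (out_nbrs E v \<inter> U)) \<le> L" if "v \<in> V" for v
      proof -
        have "card (out_nbrs E v \<inter> U) \<le> card (out_nbrs E v \<inter> U0)"
          using U(1) finU0 by (intro card_mono) auto
        then show ?thesis using cnt[OF that] by linarith
      qed
      have A: "(real k - 9) / 10 \<le> (2*L+1) * real (card U)" using size U(3) by linarith
      have "real k * L \<ge> real k" using L1 k51 by (simp add: mult_le_cancel_left1)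
      moreover have "real k * L \<ge> 51 * L" using L1 k51 by (intro mult_right_mono) auto
      ultimately have ineq: "real k * (2*L+1) \<le> 5 * L * (real k - 9)" by (simp add: algebra_simps)
      have "(real k * (2*L+1)) / (50 * L * (2*L+1)) = real k / (50 * L)"
        using L1 by (intro nonzero_mult_divide_mult_cancel_right) auto
      then have "(1/50) * real k / L = (real k * (2*L+1)) / (50 * L * (2*L+1))" by simp
      also have "\<dots> \<le> (5 * L * (real k - 9)) / (50 * L * (2*L+1))"
        using ineq L1 by (intro divide_right_mono) auto
      also have "\<dots> = ((real k - 9) * (5*L)) / ((10*(2*L+1)) * (5*L))" by (simp add: ac_simps)
      also have "\<dots> = (real k - 9) / (10*(2*L+1))"
        using L1 by (intro nonzero_mult_divide_mult_cancel_right) auto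
      also have "\<dots> = ((real k - 9) / 10) / (2*L+1)" by (simp add: divide_divide_eq_left)
      also have "\<dots> \<le> real (card U)" using A L1 by (simp add: divide_le_eq algebra_simps)
      finally have "(1/50) * real k / L \<le> real (card U)" .
      then show ?thesis using U(1,2) U0(1) cntU
        by (intro exI[of _ U]) (auto simp: L_def)
    qed
  qed
qed

end
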